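(* Let $G=(V,E)$ be a connected simple graph on $n$ vertices equipped with the minimum degree conductance function $c(u,v)=\frac{1}{\min[d(u),d(v)]}$, and for every $e\in E$ let $R(e)$ denote the effective resistance between the endpoints of $e$ in the electrical network in which each edge $e$ is a resistor of resistance $1/c(e)$. Then for every set $T\subseteq E$ of edges forming a spanning tree of $G$, $CYC[G,c]\le 2(n-1)\sum_{e\in T}R(e)$.
   Context: $d(v)$ is the degree of $v$. The effective resistance $R(u,v)$ is the voltage at $u$ when a current of 1 unit is injected at $u$ and $v$ is grounded. The random walk associated with $c$ moves from $v$ to a neighbor $u$ with probability $\frac{c(v,u)}{\sum_{w\in N(v)}c(v,w)}$; $H[u,v]$ is the expected number of steps from $u$ to reach $v$; the cyclic cover time is $CYC[G,c]=\min_{\sigma}\left(\sum_{i=1}^{n-1}H[v_{\sigma(i)},v_{\sigma(i+1)}]+H[v_{\sigma(n)},v_{\sigma(1)}]\right)$, minimum over orderings $\sigma$ of the vertices. *)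

theory Defs
  imports Complex_Main
begin

definition simple_graph :: "'a set \<Rightarrow> 'a set set \<Rightarrow> bool" where
  "simple_graph V E \<longleftrightarrow> finite V \<and>
     (\<forall>e\<in>E. \<exists>u v. u \<in> V \<and> v \<in> V \<and> u \<noteq> v \<and> e = {u, v})"

definition nbrs :: "'a set set \<Rightarrow> 'a \<Rightarrow> 'a set" where
  "nbrs E v = {u. {v, u} \<in> E}"

definition deg :: "'a set set \<Rightarrow> 'a \<Rightarrow> nat" where
  "deg E v = card (nbrs E v)"

definition connected_graph :: "'a set \<Rightarrow> 'a set set \<Rightarrow> bool" where
  "connected_graph V E \<longleftrightarrow>
     (\<forall>u\<in>V. \<forall>v\<in>V. (u, v) \<in> {(x, y). {x, y} \<in> E}\<^sup>*)"

definition has_cycle :: "'a set set \<Rightarrow> bool" where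
  "has_cycle E \<longleftrightarrow> (\<exists>xs. distinct xs \<and> length xs \<ge> 3 \<and>
     (\<forall>i < length xs. {xs ! i, xs ! ((i + 1) mod length xs)} \<in> E))"

definition spanning_tree :: "'a set \<Rightarrow> 'a set set \<Rightarrow> 'a set set \<Rightarrow> bool" where
  "spanning_tree V E T \<longleftrightarrow> T \<subseteq> E \<and> connected_graph V T \<and> \<not> has_cycle T"

definition mindeg_cond :: "'a set set \<Rightarrow> 'a \<Rightarrow> 'a \<Rightarrow> real" where
  "mindeg_cond E u v = 1 / real (min (deg E u) (deg E v))"

text \<open>Effective resistance: voltage at u when unit current is injected at u and v is grounded
  (Kirchhoff's current law at every vertex, edge e has conductance c e).\<close>
definition is_potential ::
  "('a \<Rightarrow> 'a \<Rightarrow> real) \<Rightarrow> 'a set \<Rightarrow> 'a set set \<Rightarrow> 'a \<Rightarrow> 'a \<Rightarrow> ('a \<Rightarrow> real) \<Rightarrow> bool" where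
  "is_potential c V E u v \<phi> \<longleftrightarrow> \<phi> v = 0 \<and>
     (\<forall>w\<in>V. (\<Sum>x\<in>nbrs E w. c w x * (\<phi> w - \<phi> x)) =
             (if w = u then 1 else 0) - (if w = v then 1 else 0))"

definition eff_res :: "('a \<Rightarrow> 'a \<Rightarrow> real) \<Rightarrow> 'a set \<Rightarrow> 'a set set \<Rightarrow> 'a \<Rightarrow> 'a \<Rightarrow> real" where
  "eff_res c V E u v = (THE r. \<exists>\<phi>. is_potential c V E u v \<phi> \<and> r = \<phi> u)"

definition edge_res :: "('a \<Rightarrow> 'a \<Rightarrow> real) \<Rightarrow> 'a set \<Rightarrow> 'a set set \<Rightarrow> 'a set \<Rightarrow> real" where
  "edge_res c V E e = (let p = (SOME p. e = {fst p, snd p}) in eff_res c V E (fst p) (snd p))"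

definition trans_prob :: "('a \<Rightarrow> 'a \<Rightarrow> real) \<Rightarrow> 'a set set \<Rightarrow> 'a \<Rightarrow> 'a \<Rightarrow> real" where
  "trans_prob c E x y =
     (if y \<in> nbrs E x then c x y / (\<Sum>w\<in>nbrs E x. c x w) else 0)"

text \<open>avoid c V E u v k x = probability that the walk started at u has not visited v
  at any of the times 0..k and is at x at time k.\<close>
fun avoid :: "('a \<Rightarrow> 'a \<Rightarrow> real) \<Rightarrow> 'a set \<Rightarrow> 'a set set \<Rightarrow> 'a \<Rightarrow> 'a \<Rightarrow> nat \<Rightarrow> 'a \<Rightarrow> real" where
  "avoid c V E u v 0 x = (if x = u \<and> u \<noteq> v then 1 else 0)"
| "avoid c V E u v (Suc k) y =
     (if y \<in> V - {v} then (\<Sum>x\<in>V - {v}. avoid c V E u v k x * trans_prob c E x y) else 0)"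

text \<open>Probability that the first visit to v happens exactly at step k+1.\<close>
definition first_hit_prob :: "('a \<Rightarrow> 'a \<Rightarrow> real) \<Rightarrow> 'a set \<Rightarrow> 'a set set \<Rightarrow> 'a \<Rightarrow> 'a \<Rightarrow> nat \<Rightarrow> real" where
  "first_hit_prob c V E u v k = (\<Sum>x\<in>V - {v}. avoid c V E u v k x * trans_prob c E x v)"

definition hit_time :: "('a \<Rightarrow> 'a \<Rightarrow> real) \<Rightarrow> 'a set \<Rightarrow> 'a set set \<Rightarrow> 'a \<Rightarrow> 'a \<Rightarrow> real" where
  "hit_time c V E u v = (\<Sum>k. real (Suc k) * first_hit_prob c V E u v k)"

definition cyc_sum :: "('a \<Rightarrow> 'a \<Rightarrow> real) \<Rightarrow> 'a set \<Rightarrow> 'a set set \<Rightarrow> 'a list \<Rightarrow> real" where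
  "cyc_sum c V E xs =
     (\<Sum>i<length xs. hit_time c V E (xs ! i) (xs ! ((i + 1) mod length xs)))"

definition CYC :: "('a \<Rightarrow> 'a \<Rightarrow> real) \<Rightarrow> 'a set \<Rightarrow> 'a set set \<Rightarrow> real" where
  "CYC c V E = Min {cyc_sum c V E xs | xs. distinct xs \<and> set xs = V}"

end

theory Submission
  imports Defs
begin

lemma summable_Suc_pow: "(0::real) \<le> x \<Longrightarrow> x < 1 \<Longrightarrow> summable (\<lambda>n. real (Suc n) * x^n)"
proof -
  assume a: "0 \<le> x" "x < 1"
  have "summable (\<lambda>n. diffs (\<lambda>_. 1::real) n * x^n)"
    by (rule termdiff_converges[where K=1]) (use a in \<open>auto intro: summable_geometric\<close>)
  then show ?thesis by (simp add: diffs_def)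
qed

locale walk =
  fixes V :: "'a set" and E :: "'a set set" and c :: "'a \<Rightarrow> 'a \<Rightarrow> real"
  assumes finV: "finite V"
  and edgesV: "\<And>e. e\<in>E \<Longrightarrow> \<exists>u v. u\<in>V \<and> v\<in>V \<and> u\<noteq>v \<and> e={u,v}"
  and conn: "connected_graph V E"
  and cpos: "\<And>x y. y \<in> nbrs E x \<Longrightarrow> c x y > 0"
  and csym: "\<And>x y. c x y = c y x"
  and nontriv: "\<And>x. x\<in>V \<Longrightarrow> \<exists>y\<in>V. y\<noteq>x"
begin

abbreviation P where "P \<equiv> trans_prob c E"
definition cs where "cs x = (\<Sum>y\<in>nbrs E x. c x y)"

lemma nbrsD: "y \<in> nbrs E x \<Longrightarrow> x\<in>V \<and> y\<in>V \<and> x\<noteq>y"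
proof -
  assume "y \<in> nbrs E x"
  then have "{x,y} \<in> E" by (simp add: nbrs_def)
  from edgesV[OF this] obtain u v where "u\<in>V" "v\<in>V" "u\<noteq>v" "{x,y}={u,v}" by blast
  then show ?thesis by (auto simp: doubleton_eq_iff)
qed

lemma nbrs_sym: "y \<in> nbrs E x \<longleftrightarrow> x \<in> nbrs E y"
  by (simp add: nbrs_def insert_commute)

lemma nbrs_sub: "nbrs E x \<subseteq> V" using nbrsD by blast

lemma fin_nbrs: "finite (nbrs E x)" using nbrs_sub finV finite_subset by blast

lemma nbrs_ne: assumes "x\<in>V" shows "nbrs E x \<noteq> {}"
proof -
  obtain y where y: "y\<in>V" "y\<noteq>x" using nontriv[OF assms] by blast
  have "(x,y) \<in> {(a,b). {a,b}\<in>E}\<^sup>*" using conn assms y by (simp add: connected_graph_def)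
  then show ?thesis
  proof (cases rule: converse_rtranclE)
    case base then show ?thesis using y by simp
  next
    case (step z) then show ?thesis by (auto simp: nbrs_def)
  qed
qed

lemma cs_pos: "x\<in>V \<Longrightarrow> cs x > 0"
  unfolding cs_def using nbrs_ne fin_nbrs cpos by (intro sum_pos) auto

lemma P_nonneg: "x \<in> V \<Longrightarrow> P x y \<ge> 0"
  unfolding trans_prob_def using cpos[of y x] cs_pos[of x] by (auto simp: cs_def[symmetric] less_imp_le)

lemma P_eq: "P x y = (if y \<in> nbrs E x then c x y / cs x else 0)"
  by (simp add: trans_prob_def cs_def)

lemma P_sum_nbrs: "x\<in>V \<Longrightarrow> (\<Sum>y\<in>nbrs E x. P x y) = 1"
proof -
  assume x: "x\<in>V"
  have "(\<Sum>y\<in>nbrs E x. P x y) = (\<Sum>y\<in>nbrs E x. c x y / cs x)" by (simp add: P_eq)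
  also have "\<dots> = cs x / cs x" by (simp only: sum_divide_distrib[symmetric] cs_def)
  also have "\<dots> = 1" using cs_pos[OF x] by simp
  finally show ?thesis .
qed

lemma sum_V_nbrs: "(\<Sum>y\<in>V. P x y * g y) = (\<Sum>y\<in>nbrs E x. P x y * g y)"
  by (rule sum.mono_neutral_right) (auto simp: finV nbrs_sub P_eq)

lemma P_sum: "x\<in>V \<Longrightarrow> (\<Sum>y\<in>V. P x y) = 1"
  using sum_V_nbrs[of x "\<lambda>_. 1"] P_sum_nbrs by simp


lemma avoid_out: "u\<in>V \<Longrightarrow> x \<notin> V - {v} \<Longrightarrow> avoid c V E u v k x = 0"
  by (cases k) auto

lemma avoid_self: "avoid c V E v v k x = 0"
  by (induction k arbitrary: x) auto

lemma avoid_nonneg: "u\<in>V \<Longrightarrow> avoid c V E u v k x \<ge> 0"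
proof (induction k arbitrary: x)
  case 0 then show ?case by simp
next
  case (Suc k) then show ?case by (auto intro!: sum_nonneg mult_nonneg_nonneg P_nonneg)
qed

lemma avoid_add: "u\<in>V \<Longrightarrow> avoid c V E u v (a+b) y = (\<Sum>w\<in>V-{v}. avoid c V E u v a w * avoid c V E w v b y)"
proof (induction b arbitrary: y)
  case 0
  have "(\<Sum>w\<in>V-{v}. avoid c V E u v a w * avoid c V E w v 0 y)
      = (\<Sum>w\<in>V-{v}. if w = y then avoid c V E u v a w else 0)"
    by (rule sum.cong) auto
  also have "\<dots> = (if y \<in> V-{v} then avoid c V E u v a y else 0)"
    using finV by simp
  also have "\<dots> = avoid c V E u v a y" using avoid_out[OF 0] by auto
  finally show ?case by simp
next
  case (Suc b)
  show ?case
  proof (cases "y \<in> V - {v}")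
    case True
    have "avoid c V E u v (a + Suc b) y = (\<Sum>x\<in>V-{v}. avoid c V E u v (a+b) x * P x y)"
      using True by simp
    also have "\<dots> = (\<Sum>x\<in>V-{v}. \<Sum>w\<in>V-{v}. avoid c V E u v a w * avoid c V E w v b x * P x y)"
      using Suc by (simp add: sum_distrib_right)
    also have "\<dots> = (\<Sum>w\<in>V-{v}. \<Sum>x\<in>V-{v}. avoid c V E u v a w * avoid c V E w v b x * P x y)"
      by (rule sum.swap)
    also have "\<dots> = (\<Sum>w\<in>V-{v}. avoid c V E u v a w * avoid c V E w v (Suc b) y)"
      using True by (simp add: sum_distrib_left mult.assoc)
    finally show ?thesis .
  next
    case False
    then show ?thesis by (cases "y \<in> V") auto
  qed
qed

lemma avoid_one: "u\<in>V - {v} \<Longrightarrow> avoid c V E u v 1 w = (if w \<in> V - {v} then P u w else 0)"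
proof -
  assume u: "u \<in> V - {v}"
  have "(\<Sum>x\<in>V-{v}. (if x = u \<and> u \<noteq> v then 1 else 0) * P x w) = (\<Sum>x\<in>V-{v}. if x = u then P x w else 0)"
    by (rule sum.cong) auto
  also have "\<dots> = P u w" using u by (simp add: sum.delta' finV)
  finally show ?thesis by simp
qed

lemma avoid_Suc_first: "u\<in>V - {v} \<Longrightarrow> avoid c V E u v (Suc k) y = (\<Sum>w\<in>V-{v}. P u w * avoid c V E w v k y)"
proof -
  assume u: "u\<in>V - {v}"
  have "avoid c V E u v (Suc k) y = avoid c V E u v (1+k) y" by simp
  also have "\<dots> = (\<Sum>w\<in>V-{v}. avoid c V E u v 1 w * avoid c V E w v k y)"
    using avoid_add u by blast
  also have "\<dots> = (\<Sum>w\<in>V-{v}. P u w * avoid c V E w v k y)"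
    using avoid_one[OF u] by (intro sum.cong) (auto simp del: avoid.simps)
  finally show ?thesis .
qed


definition M where "M v k u = (\<Sum>x\<in>V-{v}. avoid c V E u v k x)"
abbreviation fh where "fh u v k \<equiv> first_hit_prob c V E u v k"

lemma fh_nonneg: "u\<in>V \<Longrightarrow> fh u v k \<ge> 0"
  unfolding first_hit_prob_def by (auto intro!: sum_nonneg mult_nonneg_nonneg P_nonneg avoid_nonneg)

lemma M_nonneg: "u\<in>V \<Longrightarrow> M v k u \<ge> 0"
  unfolding M_def by (auto intro!: sum_nonneg avoid_nonneg)

lemma M_0: "u\<in>V-{v} \<Longrightarrow> M v 0 u = 1"
  unfolding M_def using finV by (simp add: sum.delta')

lemma sum_P_minus: "v \<in> V \<Longrightarrow> x \<in> V \<Longrightarrow> (\<Sum>y\<in>V-{v}. P x y) = 1 - P x v"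
  using P_sum[of x] finV by (simp add: sum_diff1)

lemma M_Suc: assumes "u\<in>V" "v\<in>V" shows "M v (Suc k) u = M v k u - fh u v k"
proof -
  have "M v (Suc k) u = (\<Sum>y\<in>V-{v}. \<Sum>x\<in>V-{v}. avoid c V E u v k x * P x y)"
    unfolding M_def by (intro sum.cong) auto
  also have "\<dots> = (\<Sum>x\<in>V-{v}. \<Sum>y\<in>V-{v}. avoid c V E u v k x * P x y)" by (rule sum.swap)
  also have "\<dots> = (\<Sum>x\<in>V-{v}. avoid c V E u v k x * (1 - P x v))"
    by (intro sum.cong) (use sum_P_minus[OF assms(2)] in \<open>auto simp: sum_distrib_left[symmetric]\<close>)
  also have "\<dots> = M v k u - fh u v k"
    by (simp add: M_def first_hit_prob_def right_diff_distrib sum_subtractf)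
  finally show ?thesis .
qed

lemma fh_le_M: "u\<in>V \<Longrightarrow> v\<in>V \<Longrightarrow> fh u v k \<le> M v k u"
  using M_Suc[of u v k] M_nonneg[of u v "Suc k"] by simp

lemma M_mono: assumes "u\<in>V" "v\<in>V" "k \<le> k'" shows "M v k' u \<le> M v k u"
  using assms(3)
proof (induction k' rule: dec_induct)
  case base then show ?case by simp
next
  case (step n) then show ?case using M_Suc[OF assms(1,2), of n] fh_nonneg[OF assms(1), of v n] by simp
qed

lemma M_add: "u\<in>V \<Longrightarrow> M v (a+b) u = (\<Sum>w\<in>V-{v}. avoid c V E u v a w * M v b w)"
proof -
  assume u: "u\<in>V"
  have "M v (a+b) u = (\<Sum>x\<in>V-{v}. \<Sum>w\<in>V-{v}. avoid c V E u v a w * avoid c V E w v b x)"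
    unfolding M_def using avoid_add[OF u] by simp
  also have "\<dots> = (\<Sum>w\<in>V-{v}. \<Sum>x\<in>V-{v}. avoid c V E u v a w * avoid c V E w v b x)" by (rule sum.swap)
  finally show ?thesis by (simp add: M_def sum_distrib_left)
qed

lemma fh_partial: "u\<in>V-{v} \<Longrightarrow> v\<in>V \<Longrightarrow> (\<Sum>k<K. fh u v k) = 1 - M v K u"
proof (induction K)
  case 0 then show ?case using M_0 by simp
next
  case (Suc K) then show ?case using M_Suc[of u v K] by simp
qed

lemma fh_0: assumes "u\<in>V-{v}" shows "fh u v 0 = P u v"
proof -
  have "fh u v 0 = (\<Sum>x\<in>V-{v}. if x = u then P x v else 0)"
    unfolding first_hit_prob_def by (intro sum.cong) auto
  also have "\<dots> = P u v" using assms finV by simp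
  finally show ?thesis .
qed

lemma fh_Suc: assumes u: "u\<in>V-{v}" shows "fh u v (Suc k) = (\<Sum>w\<in>V-{v}. P u w * fh w v k)"
proof -
  have "fh u v (Suc k) = (\<Sum>x\<in>V-{v}. \<Sum>w\<in>V-{v}. P u w * avoid c V E w v k x * P x v)"
    unfolding first_hit_prob_def
    by (intro sum.cong refl) (simp only: avoid_Suc_first[OF u] sum_distrib_right)
  also have "\<dots> = (\<Sum>w\<in>V-{v}. \<Sum>x\<in>V-{v}. P u w * avoid c V E w v k x * P x v)" by (rule sum.swap)
  also have "\<dots> = (\<Sum>w\<in>V-{v}. P u w * fh w v k)"
    by (simp add: first_hit_prob_def sum_distrib_left mult.assoc)
  finally show ?thesis .
qed

lemma fh_self: "fh v v k = 0"
  by (simp add: first_hit_prob_def avoid_self)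


lemma P_pos: "z \<in> nbrs E y \<Longrightarrow> P y z > 0"
  using cpos[of z y] cs_pos[of y] nbrsD[of z y] by (simp add: P_eq)

lemma fh_pos: assumes v: "v\<in>V" and u: "u\<in>V" "u\<noteq>v" shows "\<exists>k. fh u v k > 0"
proof -
  have "(u,v) \<in> {(a,b). {a,b}\<in>E}\<^sup>*" using conn u v by (simp add: connected_graph_def)
  then show ?thesis using u
  proof (induction rule: converse_rtrancl_induct)
    case base then show ?case by simp
  next
    case (step y z)
    from step.hyps(1) have yz: "z \<in> nbrs E y" by (simp add: nbrs_def)
    then have zV: "z\<in>V" using nbrsD by auto
    have Ppos: "P y z > 0" using P_pos[OF yz] .
    show ?case
    proof (cases "z = v")
      case True then have "fh y v 0 > 0" using fh_0[of y v] step.prems Ppos by simp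
      thus ?thesis by blast
    next
      case False
      then obtain k where k: "fh z v k > 0" using step.IH zV by blast
      have "P y z * fh z v k \<le> (\<Sum>w\<in>V-{v}. P y w * fh w v k)"
        by (rule member_le_sum) (use zV False finV step.prems in \<open>auto intro!: mult_nonneg_nonneg P_nonneg fh_nonneg\<close>)
      moreover have "P y z * fh z v k > 0" using Ppos k by simp
      ultimately have "fh y v (Suc k) > 0" using fh_Suc[of y v k] step.prems by simp
      thus ?thesis by blast
    qed
  qed
qed

lemma contraction: assumes v: "v\<in>V" shows "\<exists>N \<rho>. 0<N \<and> 0<\<rho> \<and> \<rho><1 \<and> (\<forall>u\<in>V-{v}. M v N u \<le> \<rho>)"
proof -
  have "\<forall>u\<in>V-{v}. \<exists>k. fh u v k > 0" using fh_pos v by blast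
  then obtain kf where kf: "\<forall>u\<in>V-{v}. fh u v (kf u) > 0" by metis
  define N where "N = Suc (Max (insert 0 (kf ` (V-{v}))))"
  have lt1: "M v N u < 1" if u: "u\<in>V-{v}" for u
  proof -
    have "kf u \<le> Max (insert 0 (kf ` (V-{v})))" using u finV by (intro Max_ge) auto
    then have "Suc (kf u) \<le> N" by (simp add: N_def)
    then have "M v N u \<le> M v (Suc (kf u)) u" using M_mono u v by blast
    also have "\<dots> = 1 - (\<Sum>k<Suc (kf u). fh u v k)" using fh_partial[OF u v, of "Suc (kf u)"] by linarith
    also have "\<dots> = 1 - (\<Sum>k<kf u. fh u v k) - fh u v (kf u)" by simp
    also have "\<dots> < 1"
    proof -
      have "(\<Sum>k<kf u. fh u v k) \<ge> 0" using u by (auto intro!: sum_nonneg fh_nonneg)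
      then show ?thesis using kf u by force
    qed
    finally show ?thesis .
  qed
  define \<rho> where "\<rho> = Max (insert (1/2) ((\<lambda>u. M v N u) ` (V-{v})))"
  have "\<rho> \<ge> 1/2" unfolding \<rho>_def using finV by (intro Max_ge) auto
  moreover have "\<rho> < 1" unfolding \<rho>_def using finV lt1 by (subst Max_less_iff) auto
  moreover have "\<forall>u\<in>V-{v}. M v N u \<le> \<rho>" unfolding \<rho>_def using finV by (auto intro!: Max_ge)
  ultimately show ?thesis by (intro exI[of _ N] exI[of _ \<rho>]) (auto simp: N_def)
qed

lemma M_pow: assumes v: "v\<in>V" and r: "0 \<le> \<rho>" and bound: "\<forall>u\<in>V-{v}. M v N u \<le> \<rho>"
  shows "u\<in>V-{v} \<Longrightarrow> M v (j*N) u \<le> \<rho>^j"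
proof (induction j arbitrary: u)
  case 0 then show ?case using M_0 by simp
next
  case (Suc j)
  have "M v (Suc j * N) u = M v (j*N + N) u" by (simp add: add.commute)
  also have "\<dots> = (\<Sum>w\<in>V-{v}. avoid c V E u v (j*N) w * M v N w)" using M_add Suc.prems by blast
  also have "\<dots> \<le> (\<Sum>w\<in>V-{v}. avoid c V E u v (j*N) w * \<rho>)"
    using Suc.prems bound by (intro sum_mono mult_left_mono avoid_nonneg) auto
  also have "\<dots> = \<rho> * M v (j*N) u" by (simp add: M_def sum_distrib_left mult.commute)
  also have "\<dots> \<le> \<rho> * \<rho>^j" using Suc r by (intro mult_left_mono) auto
  finally show ?case by simp
qed

lemma M_geom: assumes v: "v\<in>V"
  shows "\<exists>C \<sigma>. 0<\<sigma> \<and> \<sigma><1 \<and> 0\<le>C \<and> (\<forall>u\<in>V-{v}. \<forall>k. M v k u \<le> C*\<sigma>^k)"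
proof -
  obtain N \<rho> where N: "0<N" "0<\<rho>" "\<rho><1" "\<forall>u\<in>V-{v}. M v N u \<le> \<rho>" using contraction[OF v] by blast
  define \<sigma> where "\<sigma> = root N \<rho>"
  have s0: "0 < \<sigma>" using N by (simp add: \<sigma>_def real_root_gt_zero)
  have s1: "\<sigma> < 1" using N by (simp add: \<sigma>_def)
  have sN: "\<sigma>^N = \<rho>" using N by (simp add: \<sigma>_def)
  have "M v k u \<le> (1/\<rho>)*\<sigma>^k" if u: "u\<in>V-{v}" for u k
  proof -
    define q where "q = k div N"
    define r where "r = k mod N"
    have k: "k = q*N + r" by (simp add: q_def r_def)
    have "M v k u \<le> M v (q*N) u" using M_mono[of u v "q*N" k] u v k by simp
    also have "\<dots> \<le> \<rho>^q" using M_pow[OF v _ N(4) u] N by simp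
    also have "\<dots> \<le> (1/\<rho>)*\<sigma>^k"
    proof -
      have "r \<le> N" using N by (simp add: r_def less_imp_le)
      then have "\<sigma>^N \<le> \<sigma>^r" using s0 s1 by (intro power_decreasing) auto
      then have "\<rho>^q * \<rho> \<le> \<rho>^q * \<sigma>^r" using sN N by (intro mult_left_mono) auto
      also have "\<rho>^q * \<sigma>^r = \<sigma>^k" using sN by (simp add: k power_add power_mult mult.commute)
      finally show ?thesis using N by (simp add: field_simps)
    qed
    finally show ?thesis .
  qed
  then show ?thesis using s0 s1 N by (intro exI[of _ "1/\<rho>"] exI[of _ \<sigma>]) auto
qed

lemma fh_summ: assumes v: "v\<in>V" and u: "u\<in>V-{v}"
  shows "summable (\<lambda>k. real (Suc k) * fh u v k)" "summable (fh u v)" "fh u v sums 1"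
proof -
  obtain C \<sigma> where C: "0<\<sigma>" "\<sigma><1" "0\<le>C" "\<forall>u\<in>V-{v}. \<forall>k. M v k u \<le> C*\<sigma>^k" using M_geom[OF v] by blast
  have fb: "fh u v k \<le> C*\<sigma>^k" for k
  proof -
    have "fh u v k \<le> M v k u" using fh_le_M[of u v k] u v by simp
    also have "\<dots> \<le> C*\<sigma>^k" using C(4) u by blast
    finally show ?thesis .
  qed
  have fn: "fh u v k \<ge> 0" for k using fh_nonneg u by simp
  show s1: "summable (\<lambda>k. real (Suc k) * fh u v k)"
  proof (rule summable_comparison_test')
    show "summable (\<lambda>k. C * (real (Suc k) * \<sigma>^k))"
      using summable_Suc_pow[of \<sigma>] C by (intro summable_mult) auto
    show "norm (real (Suc k) * fh u v k) \<le> C * (real (Suc k) * \<sigma>^k)" for k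
      using fb[of k] fn[of k] by (simp add: abs_mult mult_left_mono)
  qed
  show "summable (fh u v)"
  proof (rule summable_comparison_test'[OF s1])
    fix n
    have "fh u v n \<le> (1 + real n) * fh u v n" using fn[of n] by (simp add: distrib_right)
    then show "norm (fh u v n) \<le> real (Suc n) * fh u v n" using fn[of n] by simp
  qed
  have "(\<lambda>K. M v K u) \<longlonglongrightarrow> 0"
  proof (rule tendsto_sandwich[of "\<lambda>_. 0" _ _ "\<lambda>K. C*\<sigma>^K"])
    show "\<forall>\<^sub>F n in sequentially. 0 \<le> M v n u" using M_nonneg u by auto
    show "\<forall>\<^sub>F n in sequentially. M v n u \<le> C*\<sigma>^n" using C u by auto
    show "(\<lambda>n. C*\<sigma>^n) \<longlonglongrightarrow> 0" using C by (intro tendsto_mult_right_zero LIMSEQ_power_zero) auto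
  qed simp
  then have "(\<lambda>K. 1 - M v K u) \<longlonglongrightarrow> 1 - 0" by (intro tendsto_diff) auto
  then show "fh u v sums 1" unfolding sums_def using fh_partial[OF u v] by simp
qed


abbreviation H where "H u v \<equiv> hit_time c V E u v"

lemma H_self: "H v v = 0"
  by (simp add: hit_time_def fh_self)

lemma H_nonneg: assumes "u\<in>V" "v\<in>V" shows "H u v \<ge> 0"
proof (cases "u = v")
  case True then show ?thesis by (simp add: H_self)
next
  case False
  then show ?thesis unfolding hit_time_def using fh_summ(1)[of v u] assms
    by (intro suminf_nonneg) (auto intro!: mult_nonneg_nonneg fh_nonneg)
qed

lemma H_eq: assumes v: "v\<in>V" and u: "u\<in>V-{v}" shows "H u v = 1 + (\<Sum>w\<in>V-{v}. P u w * H w v)"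
proof -
  define g where "g = (\<lambda>k. real (Suc k) * fh u v k)"
  have sg: "summable g" unfolding g_def using fh_summ[OF v u] by simp
  have sw: "summable (\<lambda>k. P u w * (real (Suc k) * fh w v k + fh w v k))" if w: "w\<in>V-{v}" for w
    using fh_summ[OF v w] by (intro summable_mult summable_add) auto
  have "H u v = suminf g" by (simp add: hit_time_def g_def)
  also have "\<dots> = g 0 + (\<Sum>k. g (Suc k))" using suminf_split_head[OF sg] by simp
  also have "(\<Sum>k. g (Suc k)) = (\<Sum>k. \<Sum>w\<in>V-{v}. P u w * (real (Suc k) * fh w v k + fh w v k))"
  proof -
    have "g (Suc k) = (\<Sum>w\<in>V-{v}. P u w * (real (Suc k) * fh w v k + fh w v k))" for k
      unfolding g_def fh_Suc[OF u] sum_distrib_left by (intro sum.cong refl) (simp add: algebra_simps)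
    then show ?thesis by simp
  qed
  also have "\<dots> = (\<Sum>w\<in>V-{v}. \<Sum>k. P u w * (real (Suc k) * fh w v k + fh w v k))"
    using sw by (intro suminf_sum) auto
  also have "\<dots> = (\<Sum>w\<in>V-{v}. P u w * (H w v + 1))"
  proof (intro sum.cong refl)
    fix w assume w: "w\<in>V-{v}"
    have "(\<Sum>k. P u w * (real (Suc k) * fh w v k + fh w v k))
        = P u w * ((\<Sum>k. real (Suc k) * fh w v k) + (\<Sum>k. fh w v k))"
      using fh_summ[OF v w] by (simp add: suminf_mult suminf_add summable_add)
    also have "\<dots> = P u w * (H w v + 1)"
      using sums_unique[OF fh_summ(3)[OF v w]] by (simp add: hit_time_def)
    finally show "(\<Sum>k. P u w * (real (Suc k) * fh w v k + fh w v k)) = P u w * (H w v + 1)" .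
  qed
  also have "g 0 = P u v" using fh_0[OF u] by (simp add: g_def)
  finally have "H u v = P u v + (\<Sum>w\<in>V-{v}. P u w) + (\<Sum>w\<in>V-{v}. P u w * H w v)"
    by (simp add: distrib_left sum.distrib)
  then show ?thesis using sum_P_minus[OF v, of u] u by simp
qed

lemma H_eq_V: assumes v: "v\<in>V" and u: "u\<in>V" "u\<noteq>v" shows "H u v = 1 + (\<Sum>w\<in>V. P u w * H w v)"
proof -
  have "(\<Sum>w\<in>V. P u w * H w v) = P u v * H v v + (\<Sum>w\<in>V-{v}. P u w * H w v)"
    using v finV by (simp add: sum.remove)
  then show ?thesis using H_eq[OF v] u by (simp add: H_self)
qed

definition Lap where "Lap g x = (\<Sum>y\<in>nbrs E x. c x y * (g x - g y))"

lemma Lap_eq: "Lap g x = cs x * g x - (\<Sum>y\<in>nbrs E x. c x y * g y)"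
  by (simp add: Lap_def cs_def right_diff_distrib sum_subtractf sum_distrib_right)

lemma Lap_H: assumes v: "v\<in>V" and u: "u\<in>V" "u\<noteq>v" shows "Lap (\<lambda>x. H x v) u = cs u"
proof -
  have "(\<Sum>w\<in>V. P u w * H w v) = (\<Sum>y\<in>nbrs E u. c u y / cs u * H y v)"
    by (subst sum_V_nbrs) (intro sum.cong refl, simp add: P_eq)
  also have "\<dots> = (\<Sum>y\<in>nbrs E u. c u y * H y v) / cs u"
    by (simp add: sum_divide_distrib)
  finally have "cs u * H u v = cs u + (\<Sum>y\<in>nbrs E u. c u y * H y v)"
    using H_eq_V[OF v u] cs_pos[of u] u by (simp add: field_simps)
  then show ?thesis by (simp add: Lap_eq)
qed


lemma swap_sum: "(\<Sum>x\<in>V. \<Sum>y\<in>nbrs E x. h x y) = (\<Sum>x\<in>V. \<Sum>y\<in>nbrs E x. h y x)"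
proof -
  define S where "S = Sigma V (\<lambda>x. nbrs E x)"
  have fS: "\<forall>a\<in>V. finite (nbrs E a)" using fin_nbrs by auto
  have "(\<Sum>x\<in>V. \<Sum>y\<in>nbrs E x. h x y) = (\<Sum>(x,y)\<in>S. h x y)"
    unfolding S_def using finV fS by (simp add: sum.Sigma)
  also have "\<dots> = (\<Sum>(x,y)\<in>S. h y x)"
    by (rule sum.reindex_bij_witness[where i=prod.swap and j=prod.swap])
       (auto simp: S_def nbrs_sym dest: nbrsD)
  also have "\<dots> = (\<Sum>x\<in>V. \<Sum>y\<in>nbrs E x. h y x)"
    unfolding S_def using finV fS by (simp add: sum.Sigma)
  finally show ?thesis .
qed

lemma Lap_sum_zero: "(\<Sum>x\<in>V. Lap g x) = 0"
proof -
  have "(\<Sum>x\<in>V. Lap g x) = (\<Sum>x\<in>V. \<Sum>y\<in>nbrs E x. c y x * (g y - g x))"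
    unfolding Lap_def by (rule swap_sum)
  also have "\<dots> = - (\<Sum>x\<in>V. Lap g x)"
    unfolding Lap_def by (simp add: sum_negf[symmetric] csym algebra_simps)
  finally show ?thesis by simp
qed

lemma Lap_lin: "Lap (\<lambda>x. \<alpha> * a x + \<beta> * b x + k) w = \<alpha> * Lap a w + \<beta> * Lap b w"
  by (simp add: Lap_def sum.distrib[symmetric] sum_distrib_left algebra_simps)

definition D where "D = (\<Sum>x\<in>V. cs x)"

lemma D_pos: "V \<noteq> {} \<Longrightarrow> D > 0"
  unfolding D_def using finV cs_pos by (intro sum_pos) auto

lemma Lap_H_self: assumes v: "v\<in>V" shows "Lap (\<lambda>x. H x v) v = cs v - D"
proof -
  have "0 = (\<Sum>x\<in>V. Lap (\<lambda>x. H x v) x)" using Lap_sum_zero by simp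
  also have "\<dots> = Lap (\<lambda>x. H x v) v + (\<Sum>x\<in>V-{v}. Lap (\<lambda>x. H x v) x)"
    using v finV by (simp add: sum.remove)
  also have "(\<Sum>x\<in>V-{v}. Lap (\<lambda>x. H x v) x) = (\<Sum>x\<in>V-{v}. cs x)"
    using Lap_H v by (intro sum.cong) auto
  also have "\<dots> = D - cs v" unfolding D_def using v finV by (simp add: sum_diff1)
  finally show ?thesis by simp
qed

lemma min_principle:
  assumes b0: "b0 \<in> B" and BV: "B \<subseteq> V" and sup: "\<forall>x\<in>V-B. Lap f x \<ge> 0" and x: "x\<in>V"
  shows "\<exists>b\<in>B. f b \<le> f x"
proof -
  define mv where "mv = Min (f ` V)"
  have "mv \<in> f ` V" unfolding mv_def using finV x by (intro Min_in) auto
  then obtain m where m: "m\<in>V" "f m = mv" by auto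
  have mle: "\<forall>y\<in>V. mv \<le> f y" unfolding mv_def using finV by auto
  have "(m,b0) \<in> {(a,b). {a,b}\<in>E}\<^sup>*" using conn m b0 BV by (auto simp: connected_graph_def)
  then have "\<exists>b\<in>B. f b = mv" using m
  proof (induction rule: converse_rtrancl_induct)
    case base then show ?case using b0 by blast
  next
    case (step z z')
    show ?case
    proof (cases "z \<in> B")
      case True then show ?thesis using step.prems by blast
    next
      case False
      have zz': "z' \<in> nbrs E z" using step.hyps(1) by (simp add: nbrs_def)
      have le0: "\<forall>y\<in>nbrs E z. c z y * (f y - f z) \<ge> 0"
      proof
        fix y assume y: "y \<in> nbrs E z"
        have "f y - f z \<ge> 0" using mle step.prems nbrsD[OF y] by auto
        then show "c z y * (f y - f z) \<ge> 0" using cpos[OF y] by simp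
      qed
      have "(\<Sum>y\<in>nbrs E z. c z y * (f y - f z)) = - Lap f z"
        by (simp add: Lap_def sum_negf[symmetric] algebra_simps)
      also have "\<dots> \<le> 0" using sup False step.prems by auto
      finally have "(\<Sum>y\<in>nbrs E z. c z y * (f y - f z)) = 0"
        using le0 by (meson antisym sum_nonneg)
      then have "\<forall>y\<in>nbrs E z. c z y * (f y - f z) = 0"
        using sum_nonneg_eq_0_iff[OF fin_nbrs[of z], of "\<lambda>y. c z y * (f y - f z)"] le0 by blast
      then have "f z' = f z" using zz' cpos[OF zz'] by auto
      then show ?thesis using step.IH step.prems zz' nbrsD by auto
    qed
  qed
  then show ?thesis using mle x by force
qed

lemma pot_unique: assumes p1: "is_potential c V E u v \<phi>1" and p2: "is_potential c V E u v \<phi>2"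
  and v: "v\<in>V" and x: "x\<in>V" shows "\<phi>1 x = \<phi>2 x"
proof -
  have L: "Lap (\<lambda>y. 1 * \<phi>1 y + (-1) * \<phi>2 y + 0) w = 0" if "w\<in>V" for w
    using p1 p2 that unfolding Lap_lin by (simp add: is_potential_def Lap_def)
  have L2: "Lap (\<lambda>y. (-1) * \<phi>1 y + 1 * \<phi>2 y + 0) w = 0" if "w\<in>V" for w
    using p1 p2 that unfolding Lap_lin by (simp add: is_potential_def Lap_def)
  have "\<exists>b\<in>{v}. 1 * \<phi>1 b + (-1) * \<phi>2 b + 0 \<le> 1 * \<phi>1 x + (-1) * \<phi>2 x + 0"
    by (rule min_principle[where f="\<lambda>y. 1 * \<phi>1 y + (-1) * \<phi>2 y + 0"]) (use v x L in auto)
  moreover have "\<exists>b\<in>{v}. (-1) * \<phi>1 b + 1 * \<phi>2 b + 0 \<le> (-1) * \<phi>1 x + 1 * \<phi>2 x + 0"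
    by (rule min_principle[where f="\<lambda>y. (-1) * \<phi>1 y + 1 * \<phi>2 y + 0"]) (use v x L2 in auto)
  ultimately show ?thesis using p1 p2 by (auto simp: is_potential_def)
qed

lemma eff_res_val: assumes u: "u\<in>V" "v\<in>V" "u\<noteq>v"
  shows "eff_res c V E u v = (H u v + H v u) / D"
proof -
  define \<phi> where "\<phi> x = (1/D) * H x v + (-1/D) * H x u + H v u / D" for x
  have Dp: "D > 0" using D_pos u by auto
  have pot: "is_potential c V E u v \<phi>"
    unfolding is_potential_def
  proof (intro conjI ballI)
    show "\<phi> v = 0" by (simp add: \<phi>_def H_self)
    fix w assume w: "w\<in>V"
    have "(\<Sum>x\<in>nbrs E w. c w x * (\<phi> w - \<phi> x)) = Lap \<phi> w" by (simp add: Lap_def)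
    also have "\<dots> = (1/D) * Lap (\<lambda>x. H x v) w + (-1/D) * Lap (\<lambda>x. H x u) w"
      unfolding \<phi>_def[abs_def] by (rule Lap_lin)
    also have "\<dots> = (if w = u then 1 else 0) - (if w = v then 1 else 0)"
      using Lap_H Lap_H_self u w Dp by (auto simp: field_simps)
    finally show "(\<Sum>x\<in>nbrs E w. c w x * (\<phi> w - \<phi> x)) = (if w = u then 1 else 0) - (if w = v then 1 else 0)" .
  qed
  have "eff_res c V E u v = \<phi> u"
    unfolding eff_res_def
    by (rule the_equality) (use pot pot_unique u in blast)+
  also have "\<dots> = (H u v + H v u) / D" by (simp add: \<phi>_def H_self add_divide_distrib)
  finally show ?thesis .
qed

lemma H_triangle: assumes "x\<in>V" "y\<in>V" "z\<in>V" shows "H x z \<le> H x y + H y z"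
proof (cases "y = z")
  case True then show ?thesis using H_self[of z] by simp
next
  case False
  define f where "f w = 1 * H w y + (-1) * H w z + H y z" for w
  have "\<exists>b\<in>{y,z}. f b \<le> f x"
  proof (rule min_principle)
    show "\<forall>w\<in>V-{y,z}. Lap f w \<ge> 0"
    proof
      fix w assume w: "w\<in>V-{y,z}"
      have "Lap f w = 1 * Lap (\<lambda>w. H w y) w + (-1) * Lap (\<lambda>w. H w z) w"
        unfolding f_def[abs_def] by (rule Lap_lin)
      also have "\<dots> = 0" using Lap_H assms w by auto
      finally show "Lap f w \<ge> 0" by simp
    qed
  qed (use assms in auto)
  moreover have "f y = 0" by (simp add: f_def H_self)
  moreover have "f z \<ge> 0" using H_nonneg assms by (simp add: f_def H_self)
  ultimately have "f x \<ge> 0" by auto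
  then show ?thesis by (simp add: f_def)
qed

end

fun pc :: "('a \<Rightarrow> 'a \<Rightarrow> real) \<Rightarrow> 'a list \<Rightarrow> real" where
  "pc h (a#b#r) = h a b + pc h (b#r)"
| "pc h _ = 0"

definition cost where "cost h xs = pc h xs + h (last xs) (hd xs)"

lemma pc_append: "xs \<noteq> [] \<Longrightarrow> ys \<noteq> [] \<Longrightarrow> pc h (xs @ ys) = pc h xs + h (last xs) (hd ys) + pc h ys"
proof (induction xs)
  case Nil then show ?case by simp
next
  case (Cons a xs)
  show ?case
  proof (cases xs)
    case Nil then show ?thesis using Cons by (cases ys) auto
  next
    case (Cons b r) then show ?thesis using Cons.IH Cons.prems by simp
  qed
qed

lemma cost_rot: "xs \<noteq> [] \<Longrightarrow> ys \<noteq> [] \<Longrightarrow> cost h (xs@ys) = cost h (ys@xs)"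
  by (simp add: cost_def pc_append)

lemma pc_idx: "pc h xs = (\<Sum>i<length xs - 1. h (xs!i) (xs!Suc i))"
proof (induction h xs rule: pc.induct)
  case (1 h a b r)
  have "(\<Sum>i<length (a#b#r) - 1. h ((a#b#r)!i) ((a#b#r)!Suc i)) = (\<Sum>i<Suc (length r). h ((a#b#r)!i) ((a#b#r)!Suc i))" by simp
  also have "\<dots> = h a b + (\<Sum>i<length r. h ((b#r)!i) ((b#r)!Suc i))" by (subst sum.lessThan_Suc_shift) simp
  finally show ?case using 1 by simp
qed auto

lemma cyc_cost: assumes "xs \<noteq> []"
  shows "(\<Sum>i<length xs. h (xs!i) (xs!((i+1) mod length xs))) = cost h xs"
proof -
  obtain m where m: "length xs = Suc m" using assms by (cases xs) auto
  have "(\<Sum>i<length xs. h (xs!i) (xs!((i+1) mod length xs)))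
      = (\<Sum>i<m. h (xs!i) (xs!((i+1) mod length xs))) + h (xs!m) (xs!0)"
    by (simp add: m)
  also have "(\<Sum>i<m. h (xs!i) (xs!((i+1) mod length xs))) = (\<Sum>i<m. h (xs!i) (xs!Suc i))"
    by (intro sum.cong) (auto simp: m)
  also have "\<dots> = pc h xs" by (simp add: pc_idx m)
  also have "xs!m = last xs" using m assms by (simp add: last_conv_nth)
  also have "xs!0 = hd xs" using assms by (simp add: hd_conv_nth)
  finally show ?thesis by (simp add: cost_def)
qed

lemma cross_edge: "(a,b) \<in> R\<^sup>* \<Longrightarrow> a\<in>S \<Longrightarrow> b\<notin>S \<Longrightarrow> \<exists>x y. (x,y)\<in>R \<and> x\<in>S \<and> y\<notin>S"
proof (induction rule: rtrancl_induct)
  case base then show ?case by simp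
next
  case (step y z) then show ?case by blast
qed



context walk begin

lemma edge_res_val: assumes "a\<in>V" "b\<in>V" "a\<noteq>b"
  shows "edge_res c V E {a,b} = (H a b + H b a) / D"
proof -
  define p where "p = (SOME p. {a,b} = {fst p, snd p})"
  have "\<exists>p. {a,b} = {fst p, snd p}" by (rule exI[of _ "(a,b)"]) simp
  then have "{a,b} = {fst p, snd p}" unfolding p_def by (rule someI_ex)
  then have "(a = fst p \<and> b = snd p) \<or> (a = snd p \<and> b = fst p)" by (simp add: doubleton_eq_iff)
  moreover have er: "edge_res c V E {a,b} = eff_res c V E (fst p) (snd p)"
    unfolding edge_res_def Let_def p_def ..
  ultimately show ?thesis
  proof (elim disjE)
    assume "a = fst p \<and> b = snd p"
    then show ?thesis using eff_res_val[OF assms] er by simp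
  next
    assume "a = snd p \<and> b = fst p"
    then show ?thesis using eff_res_val[of b a] assms er by (simp add: add.commute)
  qed
qed

lemma edge_res_nonneg: assumes "e \<in> E" shows "edge_res c V E e \<ge> 0"
proof -
  obtain a b where ab: "a\<in>V" "b\<in>V" "a\<noteq>b" "e={a,b}" using edgesV[OF assms] by blast
  then have "V \<noteq> {}" using ab(1) by blast
  then have Dp: "D > 0" by (rule D_pos)
  have "0 \<le> H a b + H b a" by (rule add_nonneg_nonneg[OF H_nonneg[OF ab(1,2)] H_nonneg[OF ab(2,1)]])
  then show ?thesis unfolding ab(4) edge_res_val[OF ab(1-3)] using Dp by (rule divide_nonneg_pos)
qed

lemma finE: "finite E"
proof -
  have "E \<subseteq> Pow V"
  proof
    fix e assume "e \<in> E"
    then obtain a b where "a\<in>V" "b\<in>V" "e={a,b}" using edgesV[of e] by blast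
    then show "e \<in> Pow V" by simp
  qed
  moreover have "finite (Pow V)" using finV by simp
  ultimately show ?thesis by (rule finite_subset)
qed

lemma cover: assumes TE: "T \<subseteq> E" and Tc: "connected_graph V T" and v0: "v0 \<in> V"
  shows "\<exists>xs. distinct xs \<and> set xs = V \<and> xs \<noteq> [] \<and> cost H xs \<le> (\<Sum>e\<in>T. D * edge_res c V E e)"
proof -
  define K where "K e = D * edge_res c V E e" for e
  have Dp: "D > 0" using D_pos v0 by auto
  have Kn: "K e \<ge> 0" if "e \<in> T" for e using edge_res_nonneg[of e] that TE Dp by (auto simp: K_def)
  have finT: "finite T" using finE TE finite_subset by blast
  have claim: "1 \<le> m \<Longrightarrow> m \<le> card V \<Longrightarrow> \<exists>S xs. S\<subseteq>V \<and> card S = m \<and> distinct xs \<and> set xs = S \<and> xs \<noteq> []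
       \<and> cost H xs \<le> (\<Sum>e\<in>{e\<in>T. e\<subseteq>S}. K e)" for m
  proof (induction m)
    case 0 then show ?case by simp
  next
    case (Suc m)
    show ?case
    proof (cases "m = 0")
      case True
      have "cost H [v0] = 0" by (simp add: cost_def H_self)
      also have "0 \<le> (\<Sum>e\<in>{e\<in>T. e\<subseteq>{v0}}. K e)" using Kn by (auto intro: sum_nonneg)
      finally show ?thesis using True v0 by (intro exI[of _ "{v0}"] exI[of _ "[v0]"]) auto
    next
      case False
      then obtain S xs where IH: "S\<subseteq>V" "card S = m" "distinct xs" "set xs = S" "xs \<noteq> []"
        "cost H xs \<le> (\<Sum>e\<in>{e\<in>T. e\<subseteq>S}. K e)" using Suc by auto
      obtain z where z: "z\<in>V" "z\<notin>S"
      proof -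
        have "\<not> V \<subseteq> S"
        proof
          assume "V \<subseteq> S"
          then have "card V \<le> card S" using IH(1) finV by (simp add: card_mono)
          then show False using Suc IH by simp
        qed
        then show ?thesis using that by blast
      qed
      obtain s0 where s0: "s0 \<in> S" using IH by (cases xs) auto
      have "(s0, z) \<in> {(x, y). {x, y} \<in> T}\<^sup>*" using Tc IH(1) s0 z by (auto simp: connected_graph_def)
      from cross_edge[OF this s0 z(2)] obtain p l where pl: "{p,l} \<in> T" "p\<in>S" "l\<notin>S" by blast
      have "l \<in> nbrs E p" using pl TE by (auto simp: nbrs_def)
      then have lV: "l \<in> V" and pV: "p\<in>V" and pl_ne: "p \<noteq> l" using nbrsD by auto
      obtain as bs where xs: "xs = as @ p # bs" using split_list pl(2) IH(4) by metis
      define zs where "zs = bs @ as @ [p]"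
      have czs: "cost H zs = cost H xs"
      proof (cases "bs = []")
        case True then show ?thesis by (simp add: zs_def xs)
      next
        case False
        have "cost H xs = cost H ((as @ [p]) @ bs)" by (simp add: xs)
        also have "\<dots> = cost H (bs @ (as @ [p]))" using False by (intro cost_rot) auto
        finally show ?thesis by (simp add: zs_def)
      qed
      have zsne: "zs \<noteq> []" and lastzs: "last zs = p" by (auto simp: zs_def)
      have setzs: "set zs = S" and dzs: "distinct zs" using IH xs by (auto simp: zs_def)
      define ys where "ys = zs @ [l]"
      have hdV: "hd zs \<in> V" using zsne setzs IH(1) by (auto dest: hd_in_set)
      have "cost H ys = pc H zs + H p l + H l (hd zs)"
        using pc_append[OF zsne, of "[l]" H] zsne lastzs by (simp add: cost_def ys_def)
      also have "\<dots> \<le> pc H zs + H p l + (H l p + H p (hd zs))"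
        using H_triangle[OF lV pV hdV] by simp
      also have "\<dots> = cost H zs + K {p,l}"
        using edge_res_val[OF pV lV pl_ne] Dp lastzs by (simp add: cost_def K_def)
      also have "\<dots> \<le> (\<Sum>e\<in>{e\<in>T. e\<subseteq>S}. K e) + K {p,l}" using czs IH by simp
      also have "\<dots> = (\<Sum>e\<in>insert {p,l} {e\<in>T. e\<subseteq>S}. K e)"
        using pl finT by (subst sum.insert) auto
      also have "\<dots> \<le> (\<Sum>e\<in>{e\<in>T. e\<subseteq>insert l S}. K e)"
        using pl finT Kn by (intro sum_mono2) auto
      finally have cost_ys: "cost H ys \<le> (\<Sum>e\<in>{e\<in>T. e\<subseteq>insert l S}. K e)" .
      have "finite S" using IH(1) finV finite_subset by blast
      then have "card (insert l S) = Suc m" using IH pl by simp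
      moreover have "distinct ys" "set ys = insert l S" using dzs setzs pl by (auto simp: ys_def)
      ultimately show ?thesis using cost_ys IH(1) lV
        by (intro exI[of _ "insert l S"] exI[of _ ys]) (auto simp: ys_def)
    qed
  qed
  have "1 \<le> card V" using v0 finV by (simp add: Suc_le_eq card_gt_0_iff) blast
  from claim[OF this order.refl] obtain S xs where SX: "S\<subseteq>V" "card S = card V" "distinct xs" "set xs = S"
    "xs \<noteq> []" "cost H xs \<le> (\<Sum>e\<in>{e\<in>T. e\<subseteq>S}. K e)" by blast
  have "S = V" using SX finV by (intro card_subset_eq) auto
  moreover have "{e\<in>T. e\<subseteq>V} = T"
  proof -
    have "e \<subseteq> V" if eT: "e \<in> T" for e
    proof -
      obtain a b where "a\<in>V" "b\<in>V" "e={a,b}" using edgesV[of e] eT TE by blast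
      then show ?thesis by simp
    qed
    then show ?thesis by blast
  qed
  ultimately show ?thesis using SX by (auto simp: K_def)
qed


lemma D_bound: assumes cdef: "c = mindeg_cond E" and ne: "V \<noteq> {}"
  shows "D \<le> 2 * (real (card V) - 1)"
proof -
  obtain f :: "'a \<Rightarrow> nat" and n0 :: nat where f: "f ` V = {i. i < n0}" "inj_on f V"
    using finite_imp_inj_to_nat_seg[OF finV] by blast
  have fl: "f x < n0" if "x\<in>V" for x
  proof -
    have "f x \<in> f ` V" using that by (rule imageI)
    then show ?thesis unfolding f(1) by simp
  qed
  define r where "r x = deg E x * n0 + f x" for x
  have rmod: "r x mod n0 = f x" if "x\<in>V" for x using fl[OF that] by (simp add: r_def)
  have rinj: "x = y" if "x\<in>V" "y\<in>V" "r x = r y" for x y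
    using rmod[OF that(1)] rmod[OF that(2)] that f(2) by (metis inj_on_def)
  have rdeg: "deg E x \<le> deg E y" if "x\<in>V" "y\<in>V" "r x < r y" for x y
  proof (rule ccontr)
    assume "\<not> deg E x \<le> deg E y"
    then have "Suc (deg E y) \<le> deg E x" by simp
    then have "Suc (deg E y) * n0 \<le> deg E x * n0" by (rule mult_le_mono1)
    then have "r y < r x" using fl[OF that(2)] by (simp add: r_def)
    then show False using that by simp
  qed
  define mx where "mx = Max (r ` V)"
  have "mx \<in> r ` V" unfolding mx_def using finV ne by (intro Max_in) auto
  then obtain m where m: "m\<in>V" "r m = mx" by auto
  have rm: "r x \<le> r m" if "x\<in>V" for x using m finV that by (simp add: mx_def)
  define h1 where "h1 x y = (if r x < r y then c x y else 0)" for x y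
  define h2 where "h2 x y = (if r y < r x then c x y else 0)" for x y
  have split: "c x y = h1 x y + h2 x y" if "x \<in> V" "y \<in> nbrs E x" for x y
  proof -
    have xy: "x \<noteq> y" "y \<in> V" using nbrsD[OF that(2)] by auto
    have "r x \<noteq> r y" using rinj[OF that(1) xy(2)] xy(1) by auto
    then show ?thesis by (auto simp: h1_def h2_def)
  qed
  have "D = (\<Sum>x\<in>V. \<Sum>y\<in>nbrs E x. h1 x y + h2 x y)"
    unfolding D_def cs_def using split by (intro sum.cong refl) auto
  also have "\<dots> = (\<Sum>x\<in>V. \<Sum>y\<in>nbrs E x. h1 x y) + (\<Sum>x\<in>V. \<Sum>y\<in>nbrs E x. h2 x y)"
    by (simp add: sum.distrib)
  also have "(\<Sum>x\<in>V. \<Sum>y\<in>nbrs E x. h2 x y) = (\<Sum>x\<in>V. \<Sum>y\<in>nbrs E x. h2 y x)" by (rule swap_sum)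
  also have "\<dots> = (\<Sum>x\<in>V. \<Sum>y\<in>nbrs E x. h1 x y)" unfolding h1_def h2_def by (intro sum.cong refl) (metis csym)
  finally have D2: "D = 2 * (\<Sum>x\<in>V. \<Sum>y\<in>nbrs E x. h1 x y)" by simp
  have F1: "(\<Sum>y\<in>nbrs E x. h1 x y) \<le> 1" if x: "x\<in>V" for x
  proof -
    have "h1 x y \<le> 1 / real (deg E x)" if y: "y \<in> nbrs E x" for y
    proof (cases "r x < r y")
      case True
      have "y \<in> V" using nbrsD[OF y] by simp
      then have "deg E x \<le> deg E y" using rdeg[OF x _ True] by simp
      then show ?thesis using True by (simp add: h1_def cdef mindeg_cond_def min_def)
    next
      case False then show ?thesis by (simp add: h1_def)
    qed
    then have "(\<Sum>y\<in>nbrs E x. h1 x y) \<le> (\<Sum>y\<in>nbrs E x. 1 / real (deg E x))" by (rule sum_mono)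
    also have "\<dots> = real (card (nbrs E x)) / real (deg E x)" by simp
    also have "\<dots> \<le> 1" by (simp add: deg_def)
    finally show ?thesis .
  qed
  have F0: "(\<Sum>y\<in>nbrs E m. h1 m y) = 0"
  proof (intro sum.neutral ballI)
    fix y assume y: "y \<in> nbrs E m"
    then have "y \<in> V" using nbrsD by blast
    then have "\<not> r m < r y" using rm[of y] by simp
    then show "h1 m y = 0" by (simp add: h1_def)
  qed
  have "(\<Sum>x\<in>V. \<Sum>y\<in>nbrs E x. h1 x y) = (\<Sum>y\<in>nbrs E m. h1 m y) + (\<Sum>x\<in>V-{m}. \<Sum>y\<in>nbrs E x. h1 x y)"
    using m finV by (simp add: sum.remove)
  also have "\<dots> \<le> 0 + real (card (V-{m})) * 1"
  proof -
    have "(\<Sum>x\<in>V-{m}. \<Sum>y\<in>nbrs E x. h1 x y) \<le> of_nat (card (V-{m})) * 1"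
      by (rule sum_bounded_above) (use F1 in auto)
    then show ?thesis using F0 by simp
  qed
  also have "\<dots> = real (card V) - 1"
  proof -
    have "card V \<ge> 1" using m finV by (simp add: Suc_le_eq card_gt_0_iff) blast
    then show ?thesis using m finV by (simp add: of_nat_diff)
  qed
  finally show ?thesis using D2 by simp
qed

end


lemma avoid_self_gen: "avoid c V E v v k x = 0"
  by (induction k arbitrary: x) auto

lemma hit_self_gen: "hit_time c V E v v = 0"
  by (simp add: hit_time_def first_hit_prob_def avoid_self_gen)

theorem corollary1:
  fixes V :: "'a set" and E T :: "'a set set"
  assumes "simple_graph V E" and "connected_graph V E"
    and "spanning_tree V E T"
  shows "CYC (mindeg_cond E) V E
           \<le> 2 * (real (card V) - 1) * (\<Sum>e\<in>T. edge_res (mindeg_cond E) V E e)"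
proof -
  have finV: "finite V" and edg: "\<And>e. e\<in>E \<Longrightarrow> \<exists>u v. u\<in>V \<and> v\<in>V \<and> u\<noteq>v \<and> e={u,v}"
    using assms(1) by (auto simp: simple_graph_def)
  have TE: "T \<subseteq> E" and Tc: "connected_graph V T" using assms(3) by (auto simp: spanning_tree_def)
  define L where "L = {xs. distinct xs \<and> set xs = V}"
  have finL: "finite L"
    by (rule finite_subset[OF _ finite_subset_distinct[OF finV]]) (auto simp: L_def)
  obtain xs0 where xs0: "set xs0 = V" "distinct xs0" using finite_distinct_list[OF finV] by blast
  have Seq: "{cyc_sum (mindeg_cond E) V E xs | xs. distinct xs \<and> set xs = V} = cyc_sum (mindeg_cond E) V E ` L"
    by (auto simp: L_def)
  have CYCle: "CYC (mindeg_cond E) V E \<le> cyc_sum (mindeg_cond E) V E xs" if "xs \<in> L" for xs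
    unfolding CYC_def Seq using finL that by (intro Min_le finite_imageI imageI)
  show ?thesis
  proof (cases "card V \<ge> 2")
    case False
    have E0: "E = {}"
    proof (rule ccontr)
      assume "E \<noteq> {}"
      then obtain e where "e \<in> E" by blast
      then obtain u v where uv: "u\<in>V" "v\<in>V" "u\<noteq>v" using edg by blast
      then have "card {u,v} \<le> card V" using finV by (intro card_mono) auto
      then show False using uv False by simp
    qed
    then have T0: "T = {}" using TE by blast
    have "length xs0 \<le> 1" using False xs0 distinct_card[OF xs0(2)] by simp
    then have "cyc_sum (mindeg_cond E) V E xs0 = 0"
    proof (cases xs0)
      case Nil then show ?thesis by (simp add: cyc_sum_def)
    next
      case (Cons a r)
      then have "r = []" using \<open>length xs0 \<le> 1\<close> by simp
      then show ?thesis using Cons by (simp add: cyc_sum_def hit_self_gen)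
    qed
    then have "CYC (mindeg_cond E) V E \<le> 0" using CYCle[of xs0] xs0 by (simp add: L_def)
    then show ?thesis using T0 by simp
  next
    case True
    have nsub: "nbrs E x \<subseteq> V" for x
    proof
      fix y assume "y \<in> nbrs E x"
      then have "{x,y} \<in> E" by (simp add: nbrs_def)
      then obtain u v where "u\<in>V" "v\<in>V" "{x,y} = {u,v}" using edg by blast
      then show "y \<in> V" by (auto simp: doubleton_eq_iff)
    qed
    have degpos: "deg E x > 0" if "y \<in> nbrs E x" for x y
      unfolding deg_def using that nsub[of x] finV finite_subset by (metis card_gt_0_iff empty_iff)
    interpret W: walk V E "mindeg_cond E"
    proof
      show "finite V" by (rule finV)
      show "\<And>e. e \<in> E \<Longrightarrow> \<exists>u v. u \<in> V \<and> v \<in> V \<and> u \<noteq> v \<and> e = {u, v}" by (rule edg)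
      show "connected_graph V E" by (rule assms(2))
      show "0 < mindeg_cond E x y" if "y \<in> nbrs E x" for x y
      proof -
        have "x \<in> nbrs E y" using that by (simp add: nbrs_def insert_commute)
        then have "deg E y > 0" by (rule degpos)
        moreover have "deg E x > 0" using that by (rule degpos)
        ultimately show ?thesis by (simp add: mindeg_cond_def min_def)
      qed
      show "mindeg_cond E x y = mindeg_cond E y x" for x y by (simp add: mindeg_cond_def min.commute)
      show "\<exists>y\<in>V. y \<noteq> x" if "x \<in> V" for x
      proof (rule ccontr)
        assume "\<not> (\<exists>y\<in>V. y \<noteq> x)"
        then have "V \<subseteq> {x}" by blast
        then have "card V \<le> 1" using card_mono[of "{x}" V] by simp
        then show False using True by simp
      qed
    qed
    have ne: "V \<noteq> {}" using True by auto
    then obtain v0 where v0: "v0 \<in> V" by blast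
    obtain xs where xs: "distinct xs" "set xs = V" "xs \<noteq> []"
      "cost (hit_time (mindeg_cond E) V E) xs \<le> (\<Sum>e\<in>T. W.D * edge_res (mindeg_cond E) V E e)"
      using W.cover[OF TE Tc v0] by blast
    have "CYC (mindeg_cond E) V E \<le> cyc_sum (mindeg_cond E) V E xs" using CYCle xs by (simp add: L_def)
    also have "\<dots> = cost (hit_time (mindeg_cond E) V E) xs"
      unfolding cyc_sum_def using cyc_cost[OF xs(3)] by simp
    also have "\<dots> \<le> W.D * (\<Sum>e\<in>T. edge_res (mindeg_cond E) V E e)"
      using xs(4) by (simp add: sum_distrib_left)
    also have "\<dots> \<le> 2 * (real (card V) - 1) * (\<Sum>e\<in>T. edge_res (mindeg_cond E) V E e)"
    proof (rule mult_right_mono)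
      show "W.D \<le> 2 * (real (card V) - 1)" using W.D_bound[OF refl ne] .
      show "0 \<le> (\<Sum>e\<in>T. edge_res (mindeg_cond E) V E e)"
        using TE W.edge_res_nonneg by (intro sum_nonneg) auto
    qed
    finally show ?thesis .
  qed
qed

end
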